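(* For every positive integer $m$ and every complex number $\alpha \neq 0$, $$\sum_{k=1}^m H_k\, k^\alpha = \sum_{j=1}^m j!\, S(\alpha, j) \binom{m+1}{j+1} \left(H_{m+1} - \frac{1}{j+1}\right).$$
   Context: For a complex number $\alpha \neq 0$ and a positive integer $k$, the Stirling function of the second kind is $$S(\alpha, k) = \frac{1}{k!} \sum_{j=1}^k (-1)^{k-j} \binom{k}{j} j^\alpha,$$ where for a positive integer $j$, $j^\alpha = e^{\alpha \ln j}$ with $\ln j$ the real logarithm. $H_k = 1 + \frac12 + \cdots + \frac1k$ denotes the $k$-th harmonic number. *)

theory Defs
  imports "HOL-Analysis.Analysis"
begin

definition npow :: "nat \<Rightarrow> complex \<Rightarrow> complex" where
  "npow j \<alpha> = exp (\<alpha> * complex_of_real (ln (real j)))"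

definition stirling_fun :: "complex \<Rightarrow> nat \<Rightarrow> complex" where
  "stirling_fun \<alpha> k = (1 / of_nat (fact k)) *
     (\<Sum>j=1..k. (-1) ^ (k - j) * of_nat (k choose j) * npow j \<alpha>)"

end

theory Submission
  imports Defs
begin


lemma inner:
  fixes j k :: nat
  assumes "1 \<le> j" "j \<le> k"
  shows "(\<Sum>i=1..k. of_nat (k choose i) * ((-1)^(i-j) * of_nat (i choose j)) :: complex)
         = (if j = k then 1 else 0)"
proof -
  have "(\<Sum>i=1..k. of_nat (k choose i) * ((-1)^(i-j) * of_nat (i choose j)) :: complex)
      = (\<Sum>i=j..k. of_nat (k choose i) * ((-1)^(i-j) * of_nat (i choose j)))"
  proof (rule sum.mono_neutral_right)
    show "{j..k} \<subseteq> {1..k}" using assms by auto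
    show "\<forall>i\<in>{1..k} - {j..k}. of_nat (k choose i) * ((-1)^(i-j) * of_nat (i choose j)) = (0::complex)"
      by auto
  qed auto
  also have "\<dots> = (\<Sum>i=j..k. of_nat (k choose j) * ((-1)^(i-j) * of_nat ((k-j) choose (i-j))))"
  proof (rule sum.cong[OF refl])
    fix i assume "i \<in> {j..k}"
    then have "(k choose i) * (i choose j) = (k choose j) * ((k - j) choose (i - j))"
      by (intro choose_mult) auto
    then have "(of_nat (k choose i) * of_nat (i choose j) :: complex) = of_nat (k choose j) * of_nat ((k - j) choose (i - j))"
      by (metis of_nat_mult)
    then show "of_nat (k choose i) * ((-1)^(i-j) * of_nat (i choose j)) =
      (of_nat (k choose j) * ((-1)^(i-j) * of_nat ((k-j) choose (i-j))) :: complex)"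
      by (simp add: algebra_simps)
  qed
  also have "\<dots> = of_nat (k choose j) * (\<Sum>i=j..k. (-1)^(i-j) * of_nat ((k-j) choose (i-j)))"
    by (simp add: sum_distrib_left)
  also have "(\<Sum>i=j..k. (-1)^(i-j) * of_nat ((k-j) choose (i-j)) :: complex)
      = (\<Sum>l=0..k-j. (-1)^l * of_nat ((k-j) choose l))"
    using sum.shift_bounds_cl_nat_ivl[of "\<lambda>i. (-1)^(i-j) * (of_nat ((k-j) choose (i-j)) :: complex)" 0 j "k-j"]
      assms by simp
  also have "\<dots> = (if j = k then 1 else 0)"
  proof (cases "j = k")
    case True then show ?thesis by simp
  next
    case False
    then have "k - j > 0" using assms by simp
    from choose_alternating_sum[OF this] show ?thesis using False by (simp add: atLeast0AtMost)
  qed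
  finally show ?thesis by simp
qed

lemma inversion:
  fixes f :: "nat \<Rightarrow> complex"
  assumes "1 \<le> k"
  shows "(\<Sum>i=1..k. of_nat (k choose i) * (\<Sum>j=1..i. (-1)^(i-j) * of_nat (i choose j) * f j)) = f k"
proof -
  have "(\<Sum>i=1..k. of_nat (k choose i) * (\<Sum>j=1..i. (-1)^(i-j) * of_nat (i choose j) * f j))
      = (\<Sum>i=1..k. \<Sum>j=1..k. of_nat (k choose i) * ((-1)^(i-j) * of_nat (i choose j)) * f j)"
  proof (rule sum.cong[OF refl])
    fix i assume i: "i \<in> {1..k}"
    have "(\<Sum>j=1..i. (-1)^(i-j) * of_nat (i choose j) * f j) = (\<Sum>j=1..k. (-1)^(i-j) * of_nat (i choose j) * f j)"
      by (rule sum.mono_neutral_left) (use i in auto)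
    then show "of_nat (k choose i) * (\<Sum>j=1..i. (-1)^(i-j) * of_nat (i choose j) * f j)
      = (\<Sum>j=1..k. of_nat (k choose i) * ((-1)^(i-j) * of_nat (i choose j)) * f j)"
      by (simp add: sum_distrib_left algebra_simps)
  qed
  also have "\<dots> = (\<Sum>j=1..k. (\<Sum>i=1..k. of_nat (k choose i) * ((-1)^(i-j) * of_nat (i choose j))) * f j)"
    by (subst sum.swap) (simp add: sum_distrib_right)
  also have "\<dots> = (\<Sum>j=1..k. (if j = k then 1 else 0) * f j)"
    by (rule sum.cong[OF refl], subst inner) auto
  also have "\<dots> = (\<Sum>j=1..k. if j = k then f j else 0)"
    by (rule sum.cong) auto
  also have "\<dots> = f k" using assms by (subst sum.delta) auto
  finally show ?thesis .
qed

lemma harm_choose: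
  fixes i :: nat
  shows "(\<Sum>k=1..m. harm k * of_nat (k choose i) :: complex)
       = of_nat ((m+1) choose (i+1)) * (harm (m+1) - 1 / of_nat (i+1))"
proof (induction m)
  case 0
  then show ?case by (cases i) (simp_all add: harm_def)
next
  case (Suc m)
  have c1: "(of_nat (Suc (Suc m) choose Suc i) :: complex) = of_nat (Suc m choose Suc i) + of_nat (Suc m choose i)"
    by simp
  have c2: "(of_nat (Suc (Suc m) choose Suc i) :: complex) / of_nat (Suc (Suc m)) = of_nat (Suc m choose i) / of_nat (Suc i)"
  proof -
    have "Suc (Suc m) * (Suc m choose i) = (Suc (Suc m) choose Suc i) * Suc i"
      by (rule Suc_times_binomial_eq)
    then have "(of_nat (Suc (Suc m)) * of_nat (Suc m choose i) :: complex) = of_nat (Suc (Suc m) choose Suc i) * of_nat (Suc i)"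
      by (metis of_nat_mult)
    then have "(of_nat (Suc (Suc m) choose Suc i) :: complex) * of_nat (Suc i) = of_nat (Suc m choose i) * of_nat (Suc (Suc m))"
      by (simp only: mult.commute)
    moreover have "(of_nat (Suc i) :: complex) \<noteq> 0" "(of_nat (Suc (Suc m)) :: complex) \<noteq> 0"
      by (simp_all only: of_nat_eq_0_iff)
    ultimately show ?thesis using frac_eq_eq by metis
  qed
  have "(\<Sum>k=1..Suc m. harm k * of_nat (k choose i) :: complex)
      = of_nat ((m+1) choose (i+1)) * (harm (m+1) - 1 / of_nat (i+1)) + harm (Suc m) * of_nat (Suc m choose i)"
    using Suc by simp
  also have "\<dots> = of_nat (Suc (Suc m) choose Suc i) * (harm (Suc m) - 1 / of_nat (Suc i))
         + of_nat (Suc (Suc m) choose Suc i) / of_nat (Suc (Suc m))"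
    unfolding c2 by (simp add: c1 field_simps del: of_nat_Suc binomial_Suc_Suc)
  also have "\<dots> = of_nat (Suc (Suc m) choose Suc i) * (harm (Suc (Suc m)) - 1 / of_nat (Suc i))"
    by (simp add: harm_Suc[of "Suc m"] field_simps del: of_nat_Suc binomial_Suc_Suc)
  finally show ?case by simp
qed

theorem proposition4:
  fixes m :: nat and \<alpha> :: complex
  assumes "m \<ge> 1" and "\<alpha> \<noteq> 0"
  shows "(\<Sum>k=1..m. harm k * npow k \<alpha>) =
         (\<Sum>j=1..m. of_nat (fact j) * stirling_fun \<alpha> j * of_nat ((m + 1) choose (j + 1))
                       * (harm (m + 1) - 1 / of_nat (j + 1)))"
proof -
  define a where "a i = (\<Sum>j=1..i. (-1)^(i-j) * of_nat (i choose j) * npow j \<alpha>)" for i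
  have fa: "of_nat (fact j) * stirling_fun \<alpha> j = a j" for j
    unfolding a_def stirling_fun_def by (simp add: mult.assoc)
  have np: "npow k \<alpha> = (\<Sum>i=1..m. of_nat (k choose i) * a i)" if k: "k \<in> {1..m}" for k
  proof -
    have "npow k \<alpha> = (\<Sum>i=1..k. of_nat (k choose i) * a i)"
      unfolding a_def using inversion[of k "\<lambda>j. npow j \<alpha>"] k by simp
    also have "\<dots> = (\<Sum>i=1..m. of_nat (k choose i) * a i)"
      by (rule sum.mono_neutral_left) (use k in auto)
    finally show ?thesis .
  qed
  have "(\<Sum>k=1..m. harm k * npow k \<alpha>) = (\<Sum>k=1..m. \<Sum>i=1..m. harm k * of_nat (k choose i) * a i)"
    by (rule sum.cong[OF refl]) (simp add: np sum_distrib_left mult.assoc)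
  also have "\<dots> = (\<Sum>i=1..m. (\<Sum>k=1..m. harm k * of_nat (k choose i)) * a i)"
    by (subst sum.swap) (simp add: sum_distrib_right)
  also have "\<dots> = (\<Sum>i=1..m. a i * of_nat ((m + 1) choose (i + 1)) * (harm (m + 1) - 1 / of_nat (i + 1)))"
    by (rule sum.cong[OF refl]) (simp only: harm_choose, simp add: algebra_simps)
  finally show ?thesis by (simp only: fa)
qed

end
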